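(* Let $f:\mathbb{R}^n\times\mathbb{R}_{\ge 0}\to\mathbb{R}^n$ be smooth and let $\gamma_1,\dots,\gamma_s$ be linear operators such that $f$ is $\gamma_i$-equivariant for each $i$; set $\mathcal{M}_i=\{x:\gamma_i x=x\}$ and $\mathcal{M}_\cap=\bigcap_{i=1}^s\mathcal{M}_i$, and assume $\mathcal{M}_\cap\neq\{0\}$. If either (i) $\dot x=f(x,t)$ is contracting towards each subspace $\mathcal{M}_i$, $i=1,\dots,s$, or (ii) $\dot x=f(x,t)$ is contracting, then every solution of $\dot x=f(x,t)$ converges to $\mathcal{M}_\cap$ as $t\to+\infty$, i.e. all solutions asymptotically exhibit the symmetry defined by $\mathcal{M}_\cap$.
   Context: $f$ is $\gamma$-equivariant if $f(\gamma x,t)=\gamma f(x,t)$ for all $x,t$; then $\mathcal{M}_\gamma=\{x:\gamma x=x\}$ is flow-invariant. Given a vector norm with induced matrix norm $\|\cdot\|$, the matrix measure is $\mu(A)=\lim_{h\searrow0}\frac1h(\|I+hA\|-1)$. The system $\dot x=f(x,t)$ is contracting if there exist a matrix measure $\mu$ (possibly induced by a weighted norm $|\Theta x|_i$, $i\in\{1,2,\infty\}$, $\Theta$ constant invertible) and $\lambda>0$ with $\mu(\partial f/\partial x(x,t))\le-\lambda$ for all $x$ and $t\ge0$; then any two trajectories converge exponentially to each other. The system is contracting towards a flow-invariant linear subspace $\mathcal{M}$ if all its trajectories converge exponentially towards $\mathcal{M}$. *)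

theory Defs
  imports "HOL-Analysis.Analysis"
begin

text \<open>Vector fields are f :: real^'n => real => real^'n, f x t, meaningful for t >= 0.\<close>

text \<open>Smoothness, rendered as joint continuous differentiability (C^1) on R^n x [0,inf).\<close>
definition C1_field :: "(real^'n \<Rightarrow> real \<Rightarrow> real^'n) \<Rightarrow> bool" where
  "C1_field f \<longleftrightarrow>
     (\<exists>D :: ((real^'n) \<times> real) \<Rightarrow> (((real^'n) \<times> real) \<Rightarrow>\<^sub>L (real^'n)).
        (\<forall>p \<in> UNIV \<times> {0..}. ((\<lambda>q. f (fst q) (snd q)) has_derivative blinfun_apply (D p))
                                  (at p within UNIV \<times> {0..})) \<and>
        continuous_on (UNIV \<times> {0..}) D)"

definition jac :: "(real^'n \<Rightarrow> real \<Rightarrow> real^'n) \<Rightarrow> real^'n \<Rightarrow> real \<Rightarrow> real^'n^'n" where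
  "jac f x t = matrix (frechet_derivative (\<lambda>y. f y t) (at x))"

definition equivariant :: "(real^'n \<Rightarrow> real \<Rightarrow> real^'n) \<Rightarrow> real^'n^'n \<Rightarrow> bool" where
  "equivariant f g \<longleftrightarrow> (\<forall>x t. t \<ge> 0 \<longrightarrow> f (g *v x) t = g *v f x t)"

definition fix_space :: "real^'n^'n \<Rightarrow> (real^'n) set" where
  "fix_space g = {x. g *v x = x}"

definition is_solution :: "(real^'n \<Rightarrow> real \<Rightarrow> real^'n) \<Rightarrow> real \<Rightarrow> (real \<Rightarrow> real^'n) \<Rightarrow> bool" where
  "is_solution f t0 x \<longleftrightarrow>
     (\<forall>t \<ge> t0. (x has_vector_derivative f (x t) t) (at t within {t0..}))"

definition is_vnorm :: "(real^'n \<Rightarrow> real) \<Rightarrow> bool" where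
  "is_vnorm N \<longleftrightarrow> (\<forall>x. N x \<ge> 0) \<and> (\<forall>x. N x = 0 \<longleftrightarrow> x = 0) \<and>
     (\<forall>c x. N (c *\<^sub>R x) = \<bar>c\<bar> * N x) \<and> (\<forall>x y. N (x + y) \<le> N x + N y)"

definition ind_norm :: "(real^'n \<Rightarrow> real) \<Rightarrow> real^'n^'n \<Rightarrow> real" where
  "ind_norm N A = Sup {N (A *v v) | v. N v = 1}"

definition matrix_measure :: "(real^'n \<Rightarrow> real) \<Rightarrow> real^'n^'n \<Rightarrow> real" where
  "matrix_measure N A = Lim (at_right 0) (\<lambda>h. (ind_norm N (mat 1 + h *\<^sub>R A) - 1) / h)"

definition contracting :: "(real^'n \<Rightarrow> real \<Rightarrow> real^'n) \<Rightarrow> bool" where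
  "contracting f \<longleftrightarrow> (\<exists>N lam. is_vnorm N \<and> lam > 0 \<and>
      (\<forall>x t. t \<ge> 0 \<longrightarrow> matrix_measure N (jac f x t) \<le> - lam))"

definition contracting_towards :: "(real^'n \<Rightarrow> real \<Rightarrow> real^'n) \<Rightarrow> (real^'n) set \<Rightarrow> bool" where
  "contracting_towards f M \<longleftrightarrow> (\<forall>t0 x. t0 \<ge> 0 \<longrightarrow> is_solution f t0 x \<longrightarrow>
      (\<exists>C lam. lam > 0 \<and> (\<forall>t \<ge> t0. infdist (x t) M \<le> C * exp (- lam * (t - t0)))))"

end

theory Submission
  imports Defs "HOL-Real_Asymp.Real_Asymp"
begin

lemma lin_dist:
  fixes g :: "nat \<Rightarrow> real^'n^'n" and I :: "nat set"
  assumes fin: "finite I"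
  shows "\<exists>C. \<forall>x. infdist x {x. \<forall>i\<in>I. g i *v x = x} \<le> C * (\<Sum>i\<in>I. norm (x - g i *v x))"
proof -
  define K where "K = {x::real^'n. \<forall>i\<in>I. g i *v x = x}"
  define B where "B i = mat 1 - g i" for i
  have Bx: "B i *v x = x - g i *v x" for i x
    by (simp add: B_def matrix_vector_mult_diff_rdistrib)
  have subK: "subspace K"
    unfolding subspace_def K_def
    by (auto simp: matrix_vector_right_distrib matrix_vector_mult_scaleR)
  define W where "W = {z. \<forall>w\<in>K. orthogonal w z}"
  have subW: "subspace W" unfolding W_def by (rule subspace_orthogonal_to_vectors)
  have clW: "closed W" using subW closed_subspace by blast
  define F where "F w = (\<Sum>i\<in>I. transpose (B i) *v (B i *v w))" for w
  have linF: "bounded_linear F"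
  proof -
    have e: "(\<lambda>w. transpose (B i) *v (B i *v w)) = (\<lambda>w. (transpose (B i) ** B i) *v w)" for i
      by (simp only: matrix_vector_mul_assoc)
    have "linear F" unfolding F_def
      by (intro linear_compose_sum) (auto simp only: e matrix_vector_mul_linear)
    then show ?thesis by (simp add: linear_conv_bounded_linear)
  qed
  have inner_F: "inner w (F w) = (\<Sum>i\<in>I. (norm (B i *v w))^2)" for w
    unfolding F_def inner_sum_right
    by (intro sum.cong refl) (simp only: transpose_matrix_vector, subst inner_commute, simp add: dot_lmul_matrix power2_norm_eq_inner)
  have kerF: "\<forall>w\<in>W. F w = 0 \<longrightarrow> w = 0"
  proof (intro ballI impI)
    fix w assume wW: "w \<in> W" and F0: "F w = 0"
    have "(\<Sum>i\<in>I. (norm (B i *v w))^2) = 0" using inner_F[of w] F0 by simp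
    then have "\<forall>i\<in>I. (norm (B i *v w))^2 = 0"
      using fin by (subst (asm) sum_nonneg_eq_0_iff) auto
    then have "w \<in> K" unfolding K_def using Bx by auto
    then have "orthogonal w w" using wW W_def by auto
    then show "w = 0" by (simp add: orthogonal_def)
  qed
  obtain e where e: "e > 0" "\<forall>w\<in>W. norm (F w) \<ge> e * norm w"
    using injective_imp_isometric[OF clW subW linF kerF] by blast
  have "\<forall>i\<in>I. \<exists>b. \<forall>v. norm (transpose (B i) *v v) \<le> b * norm v"
    using linear_bounded[OF matrix_vector_mul_linear] by blast
  then obtain b where b: "\<And>i v. i \<in> I \<Longrightarrow> norm (transpose (B i) *v v) \<le> b i * norm v"
    by metis
  define M where "M = (\<Sum>i\<in>I. \<bar>b i\<bar>)"
  have M0: "M \<ge> 0" unfolding M_def by (simp add: sum_nonneg)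
  have Fb: "norm (F w) \<le> M * (\<Sum>i\<in>I. norm (B i *v w))" for w
  proof -
    have "norm (F w) \<le> (\<Sum>i\<in>I. norm (transpose (B i) *v (B i *v w)))"
      unfolding F_def by (rule norm_sum)
    also have "\<dots> \<le> (\<Sum>i\<in>I. M * norm (B i *v w))"
    proof (intro sum_mono)
      fix i assume i: "i \<in> I"
      have "\<bar>b i\<bar> \<le> M" unfolding M_def
        using fin i by (intro member_le_sum) auto
      then have "b i * norm (B i *v w) \<le> M * norm (B i *v w)"
        by (intro mult_right_mono) auto
      then show "norm (transpose (B i) *v (B i *v w)) \<le> M * norm (B i *v w)"
        using b[OF i, of "B i *v w"] by linarith
    qed
    finally show ?thesis by (simp add: sum_distrib_left)
  qed
  show ?thesis
  proof (intro exI allI)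
    fix x :: "real^'n"
    have spanK: "span K = K" using subK by (simp add: span_eq_iff)
    obtain y z where y: "y \<in> K" and z: "\<And>w. w \<in> K \<Longrightarrow> orthogonal z w" and xyz: "x = y + z"
      using orthogonal_subspace_decomp_exists[of K x] spanK by metis
    have zW: "z \<in> W" unfolding W_def using z by (simp add: orthogonal_commute)
    have By: "B i *v y = 0" if "i \<in> I" for i using y that Bx unfolding K_def by auto
    have Bxz: "B i *v x = B i *v z" if "i \<in> I" for i
      using By[OF that] xyz by (simp add: matrix_vector_right_distrib)
    have "infdist x K \<le> dist x y" by (rule infdist_le[OF y])
    also have "\<dots> = norm z" using xyz by (simp add: dist_norm)
    also have "\<dots> \<le> norm (F z) / e" using e zW by (simp add: field_simps mult.commute)
    also have "\<dots> \<le> M * (\<Sum>i\<in>I. norm (B i *v z)) / e"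
      using Fb[of z] e by (simp add: divide_right_mono)
    also have "\<dots> = (M / e) * (\<Sum>i\<in>I. norm (x - g i *v x))"
    proof -
      have "(\<Sum>i\<in>I. norm (B i *v z)) = (\<Sum>i\<in>I. norm (x - g i *v x))"
        by (rule sum.cong) (use Bxz Bx in metis)+
      then show ?thesis by simp
    qed
    finally show "infdist x {x. \<forall>i\<in>I. g i *v x = x} \<le> (M / e) * (\<Sum>i\<in>I. norm (x - g i *v x))"
      unfolding K_def .
  qed
qed

lemma vn_props:
  assumes "is_vnorm N"
  shows "N 0 = 0" "N (- x) = N x" "N (x - y) = N (y - x)" "N x - N y \<le> N (x - y)"
    "N (x + y) \<le> N x + N y" "N (c *\<^sub>R x) = \<bar>c\<bar> * N x" "N x \<ge> 0"
proof -
  have h: "\<And>c x. N (c *\<^sub>R x) = \<bar>c\<bar> * N x" and t: "\<And>x y. N (x + y) \<le> N x + N y"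
    and z: "\<And>x. N x = 0 \<longleftrightarrow> x = 0" and p: "\<And>x. N x \<ge> 0"
    using assms unfolding is_vnorm_def by auto
  show "N 0 = 0" using z by simp
  show neg: "N (- x) = N x" for x using h[of "-1" x] by simp
  show "N (x - y) = N (y - x)" using neg[of "x - y"] by simp
  show "N x - N y \<le> N (x - y)" using t[of "x - y" y] by simp
  show "N (x + y) \<le> N x + N y" by (rule t)
  show "N (c *\<^sub>R x) = \<bar>c\<bar> * N x" by (rule h)
  show "N x \<ge> 0" by (rule p)
qed

lemma vn_sum:
  assumes "is_vnorm N"
  shows "N (sum f A) \<le> (\<Sum>a\<in>A. N (f a))"
proof (induction A rule: infinite_finite_induct)
  case (infinite A) then show ?case using vn_props[OF assms] by simp
next
  case empty then show ?case using vn_props[OF assms] by simp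
next
  case (insert x F)
  then show ?case using vn_props(5)[OF assms, of "f x" "sum f F"] by simp
qed

lemma vn_upper:
  fixes N :: "real^'n \<Rightarrow> real"
  assumes "is_vnorm N"
  shows "\<exists>K>0. \<forall>x. N x \<le> K * norm x"
proof -
  define K where "K = 1 + (\<Sum>i\<in>UNIV. N (axis i (1::real)))"
  have "(\<Sum>i\<in>UNIV. N (axis i (1::real))) \<ge> 0" using vn_props(7)[OF assms] by (simp add: sum_nonneg)
  then have K0: "K > 0" unfolding K_def by simp
  have "N x \<le> K * norm x" for x
  proof -
    have "N x = N (\<Sum>i\<in>UNIV. (x$i) *\<^sub>R axis i 1)"
      using basis_expansion[of x] by (simp add: scalar_mult_eq_scaleR)
    also have "\<dots> \<le> (\<Sum>i\<in>UNIV. N ((x$i) *\<^sub>R axis i 1))" by (rule vn_sum[OF assms])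
    also have "\<dots> = (\<Sum>i\<in>UNIV. \<bar>x$i\<bar> * N (axis i 1))" using vn_props(6)[OF assms] by simp
    also have "\<dots> \<le> (\<Sum>i\<in>UNIV. norm x * N (axis i 1))"
      by (intro sum_mono mult_right_mono component_le_norm_cart vn_props(7)[OF assms])
    also have "\<dots> \<le> K * norm x" unfolding K_def by (simp add: sum_distrib_left[symmetric] algebra_simps)
    finally show ?thesis .
  qed
  then show ?thesis using K0 by blast
qed

lemma vn_cont:
  fixes N :: "real^'n \<Rightarrow> real"
  assumes "is_vnorm N"
  shows "continuous_on S N"
proof -
  obtain K where K: "K > 0" "\<And>x. N x \<le> K * norm x" using vn_upper[OF assms] by blast
  have "\<bar>N x - N y\<bar> \<le> K * dist x y" for x y
    using vn_props(4)[OF assms, of x y] vn_props(4)[OF assms, of y x] K(2)[of "x - y"] K(2)[of "y - x"]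
    by (simp add: dist_norm norm_minus_commute)
  then show ?thesis
    unfolding continuous_on_iff
    apply (intro ballI allI impI)
    subgoal for x e
      apply (rule exI[of _ "e / K"])
      using K by (auto simp: field_simps dist_real_def) (smt (verit) mult.commute)
    done
qed

lemma vn_lower:
  fixes N :: "real^'n \<Rightarrow> real"
  assumes "is_vnorm N"
  shows "\<exists>k>0. \<forall>x. k * norm x \<le> N x"
proof -
  have ne: "sphere (0::real^'n) 1 \<noteq> {}"
    using norm_axis_1[of undefined] by (metis empty_iff mem_sphere_0)
  obtain m where m: "m \<in> sphere 0 1" "\<And>y. y \<in> sphere 0 1 \<Longrightarrow> N m \<le> N y"
    using continuous_attains_inf[OF compact_sphere ne vn_cont[OF assms]] by blast
  have "m \<noteq> 0" using m(1) by auto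
  then have Nm: "N m > 0" using assms unfolding is_vnorm_def by (metis less_eq_real_def)
  have "N m * norm x \<le> N x" for x
  proof (cases "x = 0")
    case True then show ?thesis using vn_props(1)[OF assms] by simp
  next
    case False
    have "N m \<le> N ((1 / norm x) *\<^sub>R x)" using m(2) False by simp
    also have "\<dots> = N x / norm x" using vn_props(6)[OF assms] by simp
    finally show ?thesis using False by (simp add: field_simps)
  qed
  then show ?thesis using Nm by blast
qed

lemma vn_unit: 
  fixes N :: "real^'n \<Rightarrow> real"
  assumes "is_vnorm N"
  shows "\<exists>v. N v = 1"
proof -
  have "axis undefined (1::real) \<noteq> (0::real^'n)" by (simp add: axis_eq_0_iff)
  then have "N (axis undefined (1::real) :: real^'n) > 0" using assms unfolding is_vnorm_def
    by (metis less_eq_real_def)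
  then show ?thesis using vn_props(6)[OF assms, of "1 / N (axis undefined 1 :: real^'n)" "axis undefined 1"]
    by auto
qed

lemma ind_bdd:
  fixes N :: "real^'n \<Rightarrow> real"
  assumes "is_vnorm N"
  shows "bdd_above {N (A *v v) | v. N v = 1}"
proof -
  obtain K where K: "K > 0" "\<And>x. N x \<le> K * norm x" using vn_upper[OF assms] by blast
  obtain k where k: "k > 0" "\<And>x. k * norm x \<le> N x" using vn_lower[OF assms] by blast
  obtain b where b: "\<And>v. norm (A *v v) \<le> b * norm v"
    using linear_bounded[OF matrix_vector_mul_linear] by blast
  have "N (A *v v) \<le> K * \<bar>b\<bar> / k" if "N v = 1" for v
  proof -
    have nv: "norm v \<le> 1 / k" using k(2)[of v] that k(1) by (simp add: field_simps)
    have "N (A *v v) \<le> K * (b * norm v)" using K(2)[of "A *v v"] b[of v] K(1)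
      by (meson mult_left_mono order_trans less_imp_le)
    also have "\<dots> \<le> K * (\<bar>b\<bar> * (1/k))"
    proof -
      have "b * norm v \<le> \<bar>b\<bar> * norm v" by (simp add: mult_right_mono)
      also have "\<dots> \<le> \<bar>b\<bar> * (1/k)" using mult_left_mono[OF nv abs_ge_zero[of b]] by simp
      finally have "b * norm v \<le> \<bar>b\<bar> * (1/k)" .
      then show ?thesis using K(1) by (rule mult_left_mono[OF _ less_imp_le])
    qed
    finally show ?thesis by simp
  qed
  then show ?thesis by (auto intro!: bdd_aboveI)
qed

lemma ind_ge:
  fixes N :: "real^'n \<Rightarrow> real"
  assumes "is_vnorm N" "N v = 1"
  shows "N (A *v v) \<le> ind_norm N A"
  unfolding ind_norm_def using assms(2) by (intro cSup_upper ind_bdd[OF assms(1)]) auto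

lemma ind_apply:
  fixes N :: "real^'n \<Rightarrow> real"
  assumes "is_vnorm N"
  shows "N (A *v v) \<le> ind_norm N A * N v"
proof (cases "v = 0")
  case True then show ?thesis using vn_props(1)[OF assms] by simp
next
  case False
  then have Nv: "N v > 0" using assms unfolding is_vnorm_def by (metis less_eq_real_def)
  have "N ((1 / N v) *\<^sub>R v) = 1" using Nv vn_props(6)[OF assms] by simp
  then have "N (A *v ((1 / N v) *\<^sub>R v)) \<le> ind_norm N A" by (rule ind_ge[OF assms])
  moreover have "A *v ((1 / N v) *\<^sub>R v) = (1 / N v) *\<^sub>R (A *v v)"
    by (simp add: matrix_vector_mult_scaleR)
  ultimately have "N (A *v v) / N v \<le> ind_norm N A" using Nv vn_props(6)[OF assms] by simp
  then show ?thesis using Nv by (simp add: field_simps)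
qed

lemma ind_least:
  fixes N :: "real^'n \<Rightarrow> real"
  assumes "is_vnorm N" "\<And>v. N v = 1 \<Longrightarrow> N (A *v v) \<le> c"
  shows "ind_norm N A \<le> c"
  unfolding ind_norm_def using vn_unit[OF assms(1)] assms(2) by (intro cSup_least) auto

lemma mat_app: "(mat 1 + h *\<^sub>R A) *v v = v + h *\<^sub>R (A *v (v::real^'n))"
  for A :: "real^'n^'n"
  by (simp add: matrix_vector_mult_add_rdistrib scaleR_matrix_vector_assoc[symmetric])

lemma ev_right: "(b::real) > 0 \<Longrightarrow> eventually (\<lambda>h. 0 < h \<and> h < b) (at_right 0)"
  unfolding eventually_at_right_field by (rule exI[of _ b]) simp

lemma mm_eventually:
  fixes N :: "real^'n \<Rightarrow> real" and A :: "real^'n^'n"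
  assumes N: "is_vnorm N" and mm: "matrix_measure N A \<le> - lam" and eps: "\<epsilon> > 0"
  shows "eventually (\<lambda>h. \<forall>v. N (v + h *\<^sub>R (A *v v)) \<le> (1 - h*lam + h*\<epsilon>) * N v) (at_right 0)"
proof -
  define q where "q h = (ind_norm N (mat 1 + h *\<^sub>R A) - 1) / h" for h
  have mono: "q h1 \<le> q h2" if h1: "0 < h1" "h1 \<le> h2" for h1 h2
  proof -
    have h2: "0 < h2" using h1 by simp
    define r where "r = h1 / h2"
    have r: "0 < r" "r \<le> 1" using h1 h2 unfolding r_def by auto
    have "ind_norm N (mat 1 + h1 *\<^sub>R A) \<le> r * ind_norm N (mat 1 + h2 *\<^sub>R A) + (1 - r)"
    proof (rule ind_least[OF N])
      fix v assume v: "N v = 1"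
      have eq: "(mat 1 + h1 *\<^sub>R A) *v v = r *\<^sub>R ((mat 1 + h2 *\<^sub>R A) *v v) + (1 - r) *\<^sub>R v"
        using h2 unfolding mat_app r_def by (simp add: algebra_simps)
      have "N ((mat 1 + h1 *\<^sub>R A) *v v) \<le> N (r *\<^sub>R ((mat 1 + h2 *\<^sub>R A) *v v)) + N ((1 - r) *\<^sub>R v)"
        unfolding eq by (rule vn_props(5)[OF N])
      also have "\<dots> = r * N ((mat 1 + h2 *\<^sub>R A) *v v) + (1 - r)"
        using r v vn_props(6)[OF N] by simp
      also have "\<dots> \<le> r * ind_norm N (mat 1 + h2 *\<^sub>R A) + (1 - r)"
        using r ind_ge[OF N v] by (simp add: mult_left_mono)
      finally show "N ((mat 1 + h1 *\<^sub>R A) *v v) \<le> r * ind_norm N (mat 1 + h2 *\<^sub>R A) + (1 - r)" .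
    qed
    then have "ind_norm N (mat 1 + h1 *\<^sub>R A) - 1 \<le> r * (ind_norm N (mat 1 + h2 *\<^sub>R A) - 1)"
      by (simp add: algebra_simps)
    then have "(ind_norm N (mat 1 + h1 *\<^sub>R A) - 1) / h1 \<le> r * (ind_norm N (mat 1 + h2 *\<^sub>R A) - 1) / h1"
      using h1 by (simp add: divide_right_mono)
    also have "\<dots> = q h2" unfolding q_def r_def using h1 h2 by simp
    finally show ?thesis unfolding q_def .
  qed
  obtain u where u: "N u = 1" using vn_unit[OF N] by blast
  have lower: "- ind_norm N A \<le> q h" if h: "h > 0" for h
  proof -
    have "1 - h * ind_norm N A \<le> N u - h * N (A *v u)"
      using u ind_ge[OF N u, of A] h by (simp add: mult_left_mono)
    also have "\<dots> = N u - N (h *\<^sub>R (A *v u))" using h vn_props(6)[OF N] by simp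
    also have "\<dots> \<le> N (u + h *\<^sub>R (A *v u))" using vn_props(4)[OF N, of u "- (h *\<^sub>R (A *v u))"] vn_props(2)[OF N]
      by simp
    also have "\<dots> \<le> ind_norm N (mat 1 + h *\<^sub>R A)" using ind_ge[OF N u, of "mat 1 + h *\<^sub>R A"] by (simp add: mat_app)
    finally show ?thesis unfolding q_def using h by (simp add: field_simps)
  qed
  define L where "L = Inf (q ` {0<..})"
  have bdd: "bdd_below (q ` {0<..})" using lower by (auto intro!: bdd_belowI)
  have Lle: "L \<le> q h" if "h > 0" for h unfolding L_def using bdd that by (intro cInf_lower) auto
  have lim: "(q \<longlongrightarrow> L) (at_right 0)"
  proof (rule order_tendstoI)
    fix a assume "a < L"
    then show "eventually (\<lambda>h. a < q h) (at_right 0)"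
    proof -
      have "eventually (\<lambda>h. (0::real) < h) (at_right 0)"
        by (simp add: eventually_at_right_field) (meson zero_less_one)
      then show ?thesis by eventually_elim (rule less_le_trans[OF \<open>a < L\<close> Lle])
    qed
  next
    fix a assume "L < a"
    have ne: "q ` {0<..} \<noteq> {}" by auto
    obtain y where "y \<in> q ` {0<..}" "y < a"
      using cInf_lessD[OF ne, of a] \<open>L < a\<close> unfolding L_def by blast
    then obtain h1 where h1: "h1 \<in> {0<..}" "q h1 < a" by blast
    have "eventually (\<lambda>h. 0 < h \<and> h < h1) (at_right 0)"
      using h1(1) by (intro ev_right) simp
    then show "eventually (\<lambda>h. q h < a) (at_right 0)"
      proof eventually_elim
      case (elim h) then show ?case using mono[of h h1] h1(2) by linarith
    qed
  qed
  have "matrix_measure N A = Lim (at_right 0) q" unfolding matrix_measure_def q_def[abs_def] by (rule refl)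
  also have "\<dots> = L" using lim by (intro tendsto_Lim) simp_all
  finally have "L < - lam + \<epsilon>" using mm eps by linarith
  have ne: "q ` {0<..} \<noteq> {}" by auto
  obtain y where "y \<in> q ` {0<..}" "y < - lam + \<epsilon>"
    using cInf_lessD[OF ne, of "- lam + \<epsilon>"] \<open>L < - lam + \<epsilon>\<close> unfolding L_def by blast
  then obtain h1 where h1: "h1 \<in> {0<..}" "q h1 < - lam + \<epsilon>" by blast
  have "eventually (\<lambda>h. 0 < h \<and> h < h1) (at_right 0)"
    using h1(1) by (intro ev_right) simp
  then show ?thesis
  proof eventually_elim
    case (elim h)
    then have qh: "q h < - lam + \<epsilon>" using mono[of h h1] h1 by simp
    then have ind: "ind_norm N (mat 1 + h *\<^sub>R A) \<le> 1 - h * lam + h * \<epsilon>"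
      using elim unfolding q_def by (simp add: field_simps)
    show ?case
    proof
      fix v
      have "N (v + h *\<^sub>R (A *v v)) \<le> ind_norm N (mat 1 + h *\<^sub>R A) * N v"
        using ind_apply[OF N, of "mat 1 + h *\<^sub>R A" v] by (simp add: mat_app)
      also have "\<dots> \<le> (1 - h * lam + h * \<epsilon>) * N v"
        using ind vn_props(7)[OF N, of v] by (rule mult_right_mono)
      finally show "N (v + h *\<^sub>R (A *v v)) \<le> (1 - h * lam + h * \<epsilon>) * N v" .
    qed
  qed
qed

lemma le_eps_lemma:
  fixes x y c :: real
  assumes "c \<ge> 0" "\<And>e. e > 0 \<Longrightarrow> x \<le> y + e * c"
  shows "x \<le> y"
proof (rule ccontr)
  assume "\<not> x \<le> y"
  then have d: "x - y > 0" by simp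
  define e where "e = (x - y) / (2 * (c + 1))"
  have e0: "e > 0" using d assms(1) unfolding e_def by simp
  have "e * c \<le> e * (c + 1)" using e0 by simp
  also have "\<dots> = (x - y) / 2" unfolding e_def using assms(1) by (simp add: field_simps)
  finally have 1: "2 * (e * c) \<le> x - y" by (simp add: field_simps)
  show False using 1 assms(2)[OF e0] d by linarith
qed

lemma dini_mono:
  fixes \<phi> :: "real \<Rightarrow> real"
  assumes ab: "a \<le> b" and cont: "continuous_on {a..b} \<phi>"
    and D: "\<And>t e. a \<le> t \<Longrightarrow> t < b \<Longrightarrow> e > 0 \<Longrightarrow> eventually (\<lambda>h. \<phi> (t + h) \<le> \<phi> t + e * h) (at_right 0)"
  shows "\<phi> b \<le> \<phi> a"
proof (rule le_eps_lemma[of "2 * (b - a)"])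
  show "0 \<le> 2 * (b - a)" using ab by simp
  fix e :: real assume e: "e > 0"
  define S where "S = {t \<in> {a..b}. \<phi> t \<le> \<phi> a + 2 * e * (t - a)}"
  have clS: "closed S" unfolding S_def
    by (intro continuous_on_closed_Collect_le cont continuous_intros)
  have aS: "a \<in> S" unfolding S_def using ab by simp
  have bdd: "bdd_above S" unfolding S_def by (auto intro!: bdd_aboveI[of _ b])
  define c where "c = Sup S"
  have cS: "c \<in> S" unfolding c_def using closed_contains_Sup[OF _ bdd clS] aS by blast
  have cb: "c = b"
  proof (rule ccontr)
    assume "c \<noteq> b"
    then have cb: "c < b" using cS unfolding S_def by auto
    have ac: "a \<le> c" using cS unfolding S_def by auto
    have "eventually (\<lambda>h. \<phi> (c + h) \<le> \<phi> c + e * h \<and> (0 < h \<and> h < b - c)) (at_right 0)"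
      by (rule eventually_conj[OF D[OF ac cb e] ev_right]) (use cb in simp)
    then obtain h where h: "\<phi> (c + h) \<le> \<phi> c + e * h" "0 < h" "h < b - c"
      using eventually_happens'[of "at_right (0::real)"] by force
    have "\<phi> (c + h) \<le> \<phi> a + 2 * e * (c + h - a)"
    proof -
      have "\<phi> c \<le> \<phi> a + 2 * e * (c - a)" using cS unfolding S_def by auto
      moreover have "e * h \<le> 2 * e * h" using e h by simp
      ultimately show ?thesis using h(1) by (simp add: algebra_simps)
    qed
    then have "c + h \<in> S" unfolding S_def using h ac by auto
    then have "c + h \<le> c" unfolding c_def by (rule cSup_upper[OF _ bdd])
    then show False using h by simp
  qed
  show "\<phi> b \<le> \<phi> a + e * (2 * (b - a))" using cS cb unfolding S_def by (simp add: algebra_simps)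
qed

lemma C1_partial:
  fixes f :: "real^'n \<Rightarrow> real \<Rightarrow> real^'n"
  assumes deriv: "\<forall>p \<in> UNIV \<times> {0..}. ((\<lambda>q. f (fst q) (snd q)) has_derivative blinfun_apply (D p)) (at p within UNIV \<times> {0..})"
    and t: "t \<ge> 0"
  shows "((\<lambda>y. f y t) has_derivative (\<lambda>v. blinfun_apply (D (u, t)) (v, 0))) (at u)"
proof -
  have pd: "((\<lambda>y. (y, t)) has_derivative (\<lambda>v. (v, 0))) (at u within UNIV)"
    by (auto intro!: derivative_eq_intros)
  have "((\<lambda>y. (\<lambda>q. f (fst q) (snd q)) (y, t)) has_derivative (\<lambda>v. blinfun_apply (D (u, t)) (v, 0))) (at u within UNIV)"
    by (rule has_derivative_in_compose2[of "UNIV \<times> {0..}" _ "\<lambda>p. blinfun_apply (D p)", OF _ _ _ pd])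
       (use deriv t in auto)
  then show ?thesis by simp
qed

lemma jac_apply:
  fixes f :: "real^'n \<Rightarrow> real \<Rightarrow> real^'n"
  assumes deriv: "\<forall>p \<in> UNIV \<times> {0..}. ((\<lambda>q. f (fst q) (snd q)) has_derivative blinfun_apply (D p)) (at p within UNIV \<times> {0..})"
    and t: "t \<ge> 0"
  shows "jac f u t *v v = blinfun_apply (D (u, t)) (v, 0)"
proof -
  have hd: "((\<lambda>y. f y t) has_derivative (\<lambda>v. blinfun_apply (D (u, t)) (v, 0))) (at u)"
    by (rule C1_partial[OF deriv t])
  have "frechet_derivative (\<lambda>y. f y t) (at u) = (\<lambda>v. blinfun_apply (D (u, t)) (v, 0))"
    using frechet_derivative_at[OF hd] by simp
  moreover have "bounded_linear (\<lambda>v. blinfun_apply (D (u, t)) (v, 0))"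
    using hd by (rule has_derivative_bounded_linear)
  ultimately show ?thesis unfolding jac_def by (metis matrix_vector_mul(3))
qed

lemma seg_est:
  fixes f :: "real^'n \<Rightarrow> real \<Rightarrow> real^'n" and N :: "real^'n \<Rightarrow> real"
  assumes N: "is_vnorm N"
    and deriv: "\<forall>p \<in> UNIV \<times> {0..}. ((\<lambda>q. f (fst q) (snd q)) has_derivative blinfun_apply (D p)) (at p within UNIV \<times> {0..})"
    and cont: "continuous_on (UNIV \<times> {0..}) D"
    and mm: "\<forall>x. matrix_measure N (jac f x t) \<le> - lam"
    and t: "t \<ge> 0" and eps: "\<epsilon> > 0"
  shows "eventually (\<lambda>h. N ((a - b) + h *\<^sub>R (f a t - f b t)) \<le> (1 - h*lam) * N (a - b) + h*\<epsilon>) (at_right 0)"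
proof -
  obtain K where K: "K > 0" "\<And>x. N x \<le> K * norm x" using vn_upper[OF N] by blast
  have Nab: "N (a - b) \<ge> 0" by (rule vn_props(7)[OF N])
  define \<epsilon>1 where "\<epsilon>1 = \<epsilon> / (2 * (N (a - b) + 1))"
  have e1: "\<epsilon>1 > 0" unfolding \<epsilon>1_def using eps Nab by simp
  have e1b: "\<epsilon>1 * N (a - b) \<le> \<epsilon> / 2"
  proof -
    have "\<epsilon>1 * N (a - b) \<le> \<epsilon>1 * (N (a - b) + 1)" using e1 by simp
    also have "\<dots> = \<epsilon> / 2" unfolding \<epsilon>1_def using Nab by (simp add: field_simps)
    finally show ?thesis .
  qed
  define \<eta> where "\<eta> = \<epsilon> / (2 * K * (norm (a - b) + 1))"
  have eta: "\<eta> > 0" unfolding \<eta>_def using eps K(1)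
    by (intro divide_pos_pos mult_pos_pos) (auto intro: add_nonneg_pos)
  have etab: "K * \<eta> * norm (a - b) \<le> \<epsilon> / 2"
  proof -
    have "K * \<eta> * norm (a - b) \<le> K * \<eta> * (norm (a - b) + 1)" using eta K by simp
    also have "\<dots> = \<epsilon> / 2"
    proof -
      have np: "norm (a - b) + 1 > 0" by (smt (verit) norm_ge_zero)
      show ?thesis unfolding \<eta>_def using K(1) np by (simp add: divide_simps)
    qed
    finally show ?thesis .
  qed
  define z where "z s = b + s *\<^sub>R (a - b)" for s :: real
  define G where "G s = D (z s, t)" for s
  have Gc: "continuous_on {0..1} G" unfolding G_def
    by (rule continuous_on_compose2[OF cont]) (auto intro!: continuous_intros simp: z_def t)
  have "uniformly_continuous_on {0..1} G" by (rule compact_uniformly_continuous[OF Gc compact_Icc])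
  then obtain \<delta> where del: "\<delta> > 0"
    and delG: "\<And>s s'. s \<in> {0..1} \<Longrightarrow> s' \<in> {0..1} \<Longrightarrow> dist s' s < \<delta> \<Longrightarrow> dist (G s') (G s) < \<eta>"
    unfolding uniformly_continuous_on_def using eta by metis
  obtain m :: nat where m: "1 / \<delta> < m" using reals_Archimedean2 by blast
  have mpos: "real m > 0" using m del by (smt (verit) divide_pos_pos)
  then have m0: "m > 0" by simp
  have md: "1 / real m < \<delta>" using m del mpos by (simp add: field_simps)
  define s where "s k = real k / real m" for k :: nat
  define d where "d = (1 / real m) *\<^sub>R (a - b)"
  have sSuc: "s (Suc k) = s k + 1 / real m" for k unfolding s_def by (simp add: add_divide_distrib)
  have zs: "z (s (Suc k)) - z (s k) = d" for k
    unfolding z_def d_def sSuc by (simp add: scaleR_add_left)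
  have z0: "z (s 0) = b" unfolding z_def s_def by simp
  have zm: "z (s m) = a" unfolding z_def s_def using m0 by simp
  define J where "J k = jac f (z (s k)) t" for k
  define r where "r k = f (z (s (Suc k))) t - f (z (s k)) t - J k *v d" for k
  have rk: "norm (r k) \<le> norm d * \<eta>" if km: "k < m" for k
  proof -
    define S where "S = z ` {s k .. s (Suc k)}"
    have sub: "{s k .. s (Suc k)} \<subseteq> {0..1}"
    proof -
      have "s k \<ge> 0" unfolding s_def by simp
      moreover have "s (Suc k) \<le> 1" unfolding s_def using km mpos by (simp add: field_simps)
      ultimately show ?thesis by auto
    qed
    have Sin: "z (s k) + u *\<^sub>R (z (s (Suc k)) - z (s k)) \<in> S" if u: "u \<in> {0..1}" for u
    proof -
      have "z (s k) + u *\<^sub>R (z (s (Suc k)) - z (s k)) = z (s k + u / real m)"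
        unfolding zs unfolding d_def z_def by (simp add: algebra_simps)
      moreover have "s k + u / real m \<in> {s k .. s (Suc k)}"
        using u mpos unfolding sSuc by (auto simp: field_simps)
      ultimately show ?thesis unfolding S_def by blast
    qed
    have der: "((\<lambda>y. f y t) has_derivative (\<lambda>v. blinfun_apply (D (x, t)) (v, 0))) (at x within S)" for x
      by (rule has_derivative_at_withinI[OF C1_partial[OF deriv t]])
    have x0S: "z (s k) \<in> S" unfolding S_def using sSuc mpos by auto
    have B: "onorm ((\<lambda>v. blinfun_apply (D (x, t)) (v, 0)) - (\<lambda>v. blinfun_apply (D (z (s k), t)) (v, 0))) \<le> \<eta>"
      if xS: "x \<in> S" for x
    proof -
      obtain \<sigma> where sig: "\<sigma> \<in> {s k .. s (Suc k)}" "x = z \<sigma>" using xS unfolding S_def by blast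
      have "dist \<sigma> (s k) < \<delta>" using sig(1) md unfolding sSuc dist_real_def by auto
      moreover have "s k \<in> {0..1}" "\<sigma> \<in> {0..1}" using sub sig(1) by auto
      ultimately have "dist (G \<sigma>) (G (s k)) < \<eta>" using delG by blast
      then have nD: "norm (D (x, t) - D (z (s k), t)) \<le> \<eta>" unfolding G_def dist_norm sig(2) by simp
      show ?thesis
      proof (rule onorm_le)
        fix v :: "real^'n"
        have "norm (((\<lambda>v. blinfun_apply (D (x, t)) (v, 0)) - (\<lambda>v. blinfun_apply (D (z (s k), t)) (v, 0))) v)
              = norm (blinfun_apply (D (x, t) - D (z (s k), t)) (v, 0))"
          by (simp add: blinfun.diff_left)
        also have "\<dots> \<le> norm (D (x, t) - D (z (s k), t)) * norm (v, 0::real)" by (rule norm_blinfun)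
        also have "\<dots> \<le> \<eta> * norm v" using nD by (simp add: mult_right_mono)
        finally show "norm (((\<lambda>v. blinfun_apply (D (x, t)) (v, 0)) - (\<lambda>v. blinfun_apply (D (z (s k), t)) (v, 0))) v) \<le> \<eta> * norm v" .
      qed
    qed
    have "norm (f (z (s (Suc k))) t - f (z (s k)) t - blinfun_apply (D (z (s k), t)) (z (s (Suc k)) - z (s k), 0))
          \<le> norm (z (s (Suc k)) - z (s k)) * \<eta>"
      by (rule differentiable_bound_linearization[where f="\<lambda>y. f y t" and S=S and f'="\<lambda>x v. blinfun_apply (D (x, t)) (v, 0)", OF Sin der B x0S])
    then show ?thesis unfolding r_def J_def zs jac_apply[OF deriv t] .
  qed
  have evJ: "eventually (\<lambda>h. \<forall>k\<in>{..<m}. \<forall>v. N (v + h *\<^sub>R (J k *v v)) \<le> (1 - h*lam + h*\<epsilon>1) * N v) (at_right 0)"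
    unfolding J_def using mm_eventually[OF N mm[rule_format] e1] by (intro eventually_ball_finite) auto
  have evp: "eventually (\<lambda>h. (0::real) < h) (at_right 0)"
    by (simp add: eventually_at_right_field) (meson zero_less_one)
  show ?thesis
    using evJ evp
  proof eventually_elim
    case (elim h)
    have Sd: "(\<Sum>k<m. d) = a - b"
    proof -
      have "(\<Sum>k<m. d) = real m *\<^sub>R d" by (metis card_lessThan sum_constant_scaleR)
      also have "\<dots> = a - b" unfolding d_def scaleR_scaleR using mpos by simp
      finally show ?thesis .
    qed
    have Sr: "(\<Sum>k<m. J k *v d + r k) = f a t - f b t"
      unfolding r_def using sum_lessThan_telescope[of "\<lambda>k. f (z (s k)) t" m] z0 zm by simp
    have eq: "(a - b) + h *\<^sub>R (f a t - f b t) = (\<Sum>k<m. (d + h *\<^sub>R (J k *v d)) + h *\<^sub>R r k)"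
      unfolding Sd[symmetric] Sr[symmetric] by (simp add: sum.distrib scaleR_sum_right scaleR_add_right)
    have Nd: "N d = N (a - b) / real m" unfolding d_def using vn_props(6)[OF N] mpos by simp
    have nd: "norm d = norm (a - b) / real m" unfolding d_def using mpos by simp
    have "N ((a - b) + h *\<^sub>R (f a t - f b t)) \<le> (\<Sum>k<m. N ((d + h *\<^sub>R (J k *v d)) + h *\<^sub>R r k))"
      unfolding eq by (rule vn_sum[OF N])
    also have "\<dots> \<le> (\<Sum>k<m. (1 - h*lam + h*\<epsilon>1) * N d + h * (K * (norm d * \<eta>)))"
    proof (rule sum_mono)
      fix k assume k: "k \<in> {..<m}"
      have "N ((d + h *\<^sub>R (J k *v d)) + h *\<^sub>R r k) \<le> N (d + h *\<^sub>R (J k *v d)) + N (h *\<^sub>R r k)"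
        by (rule vn_props(5)[OF N])
      also have "N (h *\<^sub>R r k) = h * N (r k)" using vn_props(6)[OF N] elim(2) by simp
      also have "N (r k) \<le> K * (norm d * \<eta>)"
        using K(2)[of "r k"] rk[of k] k K(1) by (smt (verit) lessThan_iff mult_left_mono)
      finally show "N ((d + h *\<^sub>R (J k *v d)) + h *\<^sub>R r k) \<le> (1 - h*lam + h*\<epsilon>1) * N d + h * (K * (norm d * \<eta>))"
        using elim(1) k elim(2) by (smt (verit) mult_left_mono)
    qed
    also have "\<dots> = real m * ((1 - h*lam + h*\<epsilon>1) * N d + h * (K * (norm d * \<eta>)))" by simp
    also have "\<dots> = (1 - h*lam) * N (a - b) + h * (\<epsilon>1 * N (a - b)) + h * (K * \<eta> * norm (a - b))"
      unfolding Nd nd using mpos by (simp add: field_simps)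
    also have "\<dots> \<le> (1 - h*lam) * N (a - b) + h * (\<epsilon> / 2) + h * (\<epsilon> / 2)"
    proof -
      have "h * (\<epsilon>1 * N (a - b)) \<le> h * (\<epsilon> / 2)" using e1b elim(2) by (simp add: mult_left_mono)
      moreover have "h * (K * \<eta> * norm (a - b)) \<le> h * (\<epsilon> / 2)" using etab elim(2) by (simp add: mult_left_mono)
      ultimately show ?thesis by linarith
    qed
    finally show ?case by (simp add: mult.commute)
  qed
qed

lemma contract_conv:
  fixes f :: "real^'n \<Rightarrow> real \<Rightarrow> real^'n"
  assumes smooth: "C1_field f" and contr: "contracting f"
    and t0: "t0 \<ge> 0" and sx: "is_solution f t0 x" and sy: "is_solution f t0 y"
  shows "((\<lambda>t. x t - y t) \<longlongrightarrow> 0) at_top"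
proof -
  obtain D where deriv: "\<forall>p \<in> UNIV \<times> {0..}. ((\<lambda>q. f (fst q) (snd q)) has_derivative blinfun_apply (D p)) (at p within UNIV \<times> {0..})"
    and cont: "continuous_on (UNIV \<times> {0..}) D"
    using smooth unfolding C1_field_def by blast
  obtain N lam where N: "is_vnorm N" and lam: "lam > 0"
    and mm: "\<And>x t. t \<ge> 0 \<Longrightarrow> matrix_measure N (jac f x t) \<le> - lam"
    using contr unfolding contracting_def by blast
  obtain K where K: "K > 0" "\<And>x. N x \<le> K * norm x" using vn_upper[OF N] by blast
  obtain k where k: "k > 0" "\<And>x. k * norm x \<le> N x" using vn_lower[OF N] by blast
  define e where "e t = x t - y t" for t
  define \<phi> where "\<phi> t = N (e t)" for t
  have dx: "(x has_vector_derivative f (x t) t) (at t within {t0..})" if "t \<ge> t0" for t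
    using sx that unfolding is_solution_def by blast
  have dy: "(y has_vector_derivative f (y t) t) (at t within {t0..})" if "t \<ge> t0" for t
    using sy that unfolding is_solution_def by blast
  have de: "(e has_vector_derivative (f (x t) t - f (y t) t)) (at t within {t0..})" if "t \<ge> t0" for t
    unfolding e_def[abs_def] using dx[OF that] dy[OF that] by (rule has_vector_derivative_diff)
  have econt: "continuous_on {t0..} e"
    unfolding continuous_on_eq_continuous_within
    by (intro ballI has_vector_derivative_continuous[OF de]) simp
  have phicont: "continuous_on {t0..} \<phi>"
    unfolding \<phi>_def[abs_def] by (rule continuous_on_compose2[OF vn_cont[OF N] econt]) auto
  have phi0: "\<phi> t \<ge> 0" for t unfolding \<phi>_def by (rule vn_props(7)[OF N])
  have evp: "eventually (\<lambda>h. (0::real) < h) (at_right 0)"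
    by (simp add: eventually_at_right_field) (meson zero_less_one)
  have key: "eventually (\<lambda>h. \<phi> (t + h) \<le> (1 - h * lam) * \<phi> t + h * \<epsilon>) (at_right 0)"
    if t: "t \<ge> t0" and eps: "\<epsilon> > 0" for t \<epsilon>
  proof -
    define e' where "e' = f (x t) t - f (y t) t"
    define \<epsilon>' where "\<epsilon>' = \<epsilon> / (2 * K)"
    have e'0: "\<epsilon>' > 0" unfolding \<epsilon>'_def using eps K by simp
    have "(e has_derivative (\<lambda>u. u *\<^sub>R e')) (at t within {t0..})"
      using de[OF t] unfolding has_vector_derivative_def e'_def .
    then obtain d where d: "d > 0"
      and dd: "\<And>u. u \<in> {t0..} \<Longrightarrow> norm (u - t) < d \<Longrightarrow> norm (e u - e t - (u - t) *\<^sub>R e') \<le> \<epsilon>' * norm (u - t)"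
      unfolding has_derivative_within_alt using e'0 by blast
    have seg: "eventually (\<lambda>h. N ((x t - y t) + h *\<^sub>R (f (x t) t - f (y t) t)) \<le> (1 - h*lam) * N (x t - y t) + h*(\<epsilon>/2)) (at_right 0)"
      by (rule seg_est[OF N deriv cont]) (use mm t t0 eps in auto)
    show ?thesis
      using seg ev_right[OF d]
    proof eventually_elim
      case (elim h)
      have hp: "h > 0" "h < d" using elim(2) by auto
      have R: "norm (e (t + h) - e t - h *\<^sub>R e') \<le> \<epsilon>' * h"
        using dd[of "t + h"] hp t by simp
      have A: "\<phi> (t + h) \<le> N (e t + h *\<^sub>R e') + N (e (t + h) - e t - h *\<^sub>R e')"
        unfolding \<phi>_def using vn_props(5)[OF N, of "e t + h *\<^sub>R e'" "e (t + h) - e t - h *\<^sub>R e'"] by simp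
      have B: "N (e (t + h) - e t - h *\<^sub>R e') \<le> K * (\<epsilon>' * h)"
        using K(2)[of "e (t + h) - e t - h *\<^sub>R e'"] R K(1) by (smt (verit) mult_left_mono)
      have C: "K * (\<epsilon>' * h) = h * (\<epsilon> / 2)" unfolding \<epsilon>'_def using K(1) by simp
      have "\<phi> (t + h) \<le> N (e t + h *\<^sub>R e') + h * (\<epsilon> / 2)" using A B C by linarith
      moreover have "N (e t + h *\<^sub>R e') \<le> (1 - h*lam) * \<phi> t + h * (\<epsilon> / 2)"
        using elim(1) unfolding e_def e'_def \<phi>_def .
      ultimately show ?case by simp
    qed
  qed
  have mono: "\<phi> t2 \<le> \<phi> t1" if "t0 \<le> t1" "t1 \<le> t2" for t1 t2
  proof (rule dini_mono[OF that(2)])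
    show "continuous_on {t1..t2} \<phi>" by (rule continuous_on_subset[OF phicont]) (use that in auto)
    fix t \<epsilon> :: real assume "t1 \<le> t" "t < t2" "\<epsilon> > 0"
    then have tt: "t \<ge> t0" using that by simp
    show "eventually (\<lambda>h. \<phi> (t + h) \<le> \<phi> t + \<epsilon> * h) (at_right 0)"
      using key[OF tt \<open>\<epsilon> > 0\<close>] evp
    proof eventually_elim
      case (elim h)
      have "h * lam * \<phi> t \<ge> 0" using elim(2) lam phi0[of t] by simp
      then show ?case using elim(1) by (simp add: algebra_simps)
    qed
  qed
  have small: "\<exists>T\<ge>t0. \<phi> T < \<epsilon>" if eps: "\<epsilon> > 0" for \<epsilon>
  proof (rule ccontr)
    assume "\<not> ?thesis"
    then have big: "\<And>t. t \<ge> t0 \<Longrightarrow> \<phi> t \<ge> \<epsilon>" by (meson not_le)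
    define c where "c = lam * \<epsilon> / 2"
    have c: "c > 0" unfolding c_def using lam eps by simp
    define \<psi> where "\<psi> t = \<phi> t + c * t" for t
    define T where "T = t0 + \<phi> t0 / c + 1"
    have T: "T \<ge> t0" unfolding T_def using phi0[of t0] c by simp
    have "\<psi> T \<le> \<psi> t0"
    proof (rule dini_mono[OF T])
      show "continuous_on {t0..T} \<psi>" unfolding \<psi>_def[abs_def]
        by (intro continuous_intros continuous_on_subset[OF phicont]) auto
      fix t \<epsilon>3 :: real assume tt: "t0 \<le> t" "t < T" "\<epsilon>3 > 0"
      show "eventually (\<lambda>h. \<psi> (t + h) \<le> \<psi> t + \<epsilon>3 * h) (at_right 0)"
        using key[OF tt(1) tt(3)] evp
      proof eventually_elim
        case (elim h)
        have 2: "h * lam * \<epsilon> \<le> h * lam * \<phi> t" using big[OF tt(1)] elim(2) lam by simp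
        have 1: "\<phi> (t + h) \<le> \<phi> t - h * lam * \<phi> t + \<epsilon>3 * h" using elim(1) by (simp add: algebra_simps)
        have 3: "2 * (c * h) = h * lam * \<epsilon>" unfolding c_def by simp
        have 4: "h * lam * \<epsilon> \<ge> 0" using elim(2) lam eps by simp
        have 5: "\<psi> (t + h) = \<phi> (t + h) + c * t + c * h" unfolding \<psi>_def by (simp add: algebra_simps)
        have 6: "\<psi> t = \<phi> t + c * t" unfolding \<psi>_def by simp
        show ?case using 1 2 3 4 5 6 by linarith
      qed
    qed
    then have "\<phi> T \<le> \<phi> t0 - c * (T - t0)" unfolding \<psi>_def by (simp add: algebra_simps)
    also have "c * (T - t0) = \<phi> t0 + c" unfolding T_def using c by (simp add: algebra_simps)
    finally have "\<phi> T \<le> - c" by simp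
    then show False using phi0[of T] c by simp
  qed
  have phi_lim: "(\<phi> \<longlongrightarrow> 0) at_top"
  proof (rule order_tendstoI)
    fix a :: real assume "a < 0"
    then show "eventually (\<lambda>t. a < \<phi> t) at_top"
      using phi0 by (intro always_eventually allI) (rule less_le_trans)
  next
    fix a :: real assume "0 < a"
    then obtain T where T: "T \<ge> t0" "\<phi> T < a" using small by blast
    show "eventually (\<lambda>t. \<phi> t < a) at_top"
      unfolding eventually_at_top_linorder using T mono by (meson le_less_trans)
  qed
  have "eventually (\<lambda>t. norm (x t - y t) \<le> \<phi> t / k) at_top"
    using k unfolding \<phi>_def e_def by (auto simp: field_simps mult.commute)
  moreover have "((\<lambda>t. \<phi> t / k) \<longlongrightarrow> 0) at_top" using tendsto_divide_zero[OF phi_lim] .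
  ultimately show ?thesis by (rule Lim_null_comparison)
qed

theorem theorem8:
  fixes f :: "real^'n \<Rightarrow> real \<Rightarrow> real^'n"
    and \<gamma> :: "nat \<Rightarrow> real^'n^'n"
    and s :: nat
  assumes smooth: "C1_field f"
    and equiv: "\<forall>i \<in> {1..s}. equivariant f (\<gamma> i)"
    and nontriv: "(\<Inter>i \<in> {1..s}. fix_space (\<gamma> i)) \<noteq> {0}"
    and contr: "(\<forall>i \<in> {1..s}. contracting_towards f (fix_space (\<gamma> i))) \<or> contracting f"
  shows "\<forall>t0 x. t0 \<ge> 0 \<longrightarrow> is_solution f t0 x \<longrightarrow>
           ((\<lambda>t. infdist (x t) (\<Inter>i \<in> {1..s}. fix_space (\<gamma> i))) \<longlongrightarrow> 0) at_top"
proof (intro allI impI)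
  fix t0 :: real and x :: "real \<Rightarrow> real^'n"
  assume t0: "t0 \<ge> 0" and sx: "is_solution f t0 x"
  have Keq: "(\<Inter>i \<in> {1..s}. fix_space (\<gamma> i)) = {z. \<forall>i\<in>{1..s}. \<gamma> i *v z = z}"
    unfolding fix_space_def by auto
  have conv: "((\<lambda>t. x t - \<gamma> i *v x t) \<longlongrightarrow> 0) at_top" if i: "i \<in> {1..s}" for i
  proof (cases "\<forall>i\<in>{1..s}. contracting_towards f (fix_space (\<gamma> i))")
    case True
    then obtain C lam where lam: "lam > 0"
      and bnd: "\<And>t. t \<ge> t0 \<Longrightarrow> infdist (x t) (fix_space (\<gamma> i)) \<le> C * exp (- lam * (t - t0))"
      using i t0 sx unfolding contracting_towards_def by blast
    obtain b where b: "\<And>v. norm ((mat 1 - \<gamma> i) *v v) \<le> b * norm v"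
      using linear_bounded[OF matrix_vector_mul_linear] by blast
    have clM: "closed (fix_space (\<gamma> i))" unfolding fix_space_def
      by (intro closed_Collect_eq linear_continuous_on matrix_vector_mul_bounded_linear continuous_on_id)
    have neM: "fix_space (\<gamma> i) \<noteq> {}" unfolding fix_space_def by (auto intro!: exI[of _ 0])
    have est: "norm (x t - \<gamma> i *v x t) \<le> \<bar>b\<bar> * infdist (x t) (fix_space (\<gamma> i))" for t
    proof -
      obtain m where m: "m \<in> fix_space (\<gamma> i)" "infdist (x t) (fix_space (\<gamma> i)) = dist (x t) m"
        using infdist_attains_inf[OF clM neM] by blast
      have "x t - \<gamma> i *v x t = (mat 1 - \<gamma> i) *v (x t - m)"
        using m(1) unfolding fix_space_def
        by (simp add: matrix_vector_mult_diff_rdistrib matrix_vector_right_distrib algebra_simps)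
      then have "norm (x t - \<gamma> i *v x t) \<le> b * dist (x t) m" using b by (simp add: dist_norm)
      also have "\<dots> \<le> \<bar>b\<bar> * dist (x t) m" by (simp add: mult_right_mono)
      finally show ?thesis using m(2) by simp
    qed
    have "eventually (\<lambda>t. norm (x t - \<gamma> i *v x t) \<le> \<bar>b\<bar> * (C * exp (- lam * (t - t0)))) at_top"
      unfolding eventually_at_top_linorder
      by (rule exI[of _ t0]) (use est bnd in \<open>meson abs_ge_zero mult_left_mono order_trans\<close>)
    moreover have "((\<lambda>t. \<bar>b\<bar> * (C * exp (- lam * (t - t0)))) \<longlongrightarrow> 0) at_top"
      using lam by real_asymp
    ultimately show ?thesis by (rule Lim_null_comparison)
  next
    case False
    then have contr': "contracting f" using contr by blast
    have sy: "is_solution f t0 (\<lambda>t. \<gamma> i *v x t)"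
      unfolding is_solution_def
    proof (intro allI impI)
      fix t assume t: "t \<ge> t0"
      have "((\<lambda>t. \<gamma> i *v x t) has_vector_derivative \<gamma> i *v f (x t) t) (at t within {t0..})"
        using sx t unfolding is_solution_def
        by (intro bounded_linear.has_vector_derivative[OF matrix_vector_mul_bounded_linear]) blast
      moreover have "\<gamma> i *v f (x t) t = f (\<gamma> i *v x t) t"
        using equiv i t t0 unfolding equivariant_def by auto
      ultimately show "((\<lambda>t. \<gamma> i *v x t) has_vector_derivative f (\<gamma> i *v x t) t) (at t within {t0..})"
        by simp
    qed
    show ?thesis by (rule contract_conv[OF smooth contr' t0 sx sy])
  qed
  obtain C where C: "\<And>z. infdist z {z. \<forall>i\<in>{1..s}. \<gamma> i *v z = z} \<le> C * (\<Sum>i\<in>{1..s}. norm (z - \<gamma> i *v z))"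
    using lin_dist[of "{1..s}" \<gamma>] by auto
  have "((\<lambda>t. \<Sum>i\<in>{1..s}. norm (x t - \<gamma> i *v x t)) \<longlongrightarrow> 0) at_top"
    by (rule tendsto_null_sum) (rule tendsto_norm_zero[OF conv])
  then have lim: "((\<lambda>t. C * (\<Sum>i\<in>{1..s}. norm (x t - \<gamma> i *v x t))) \<longlongrightarrow> 0) at_top"
    by (rule tendsto_mult_right_zero)
  have ev: "eventually (\<lambda>t. norm (infdist (x t) (\<Inter>i \<in> {1..s}. fix_space (\<gamma> i)))
      \<le> C * (\<Sum>i\<in>{1..s}. norm (x t - \<gamma> i *v x t))) at_top"
    unfolding Keq
  proof (intro always_eventually allI)
    fix t
    show "norm (infdist (x t) {z. \<forall>i\<in>{1..s}. \<gamma> i *v z = z}) \<le> C * (\<Sum>i\<in>{1..s}. norm (x t - \<gamma> i *v x t))"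
      using C[of "x t"] infdist_nonneg[of "x t"] by (simp only: real_norm_def abs_of_nonneg)
  qed
  show "((\<lambda>t. infdist (x t) (\<Inter>i \<in> {1..s}. fix_space (\<gamma> i))) \<longlongrightarrow> 0) at_top"
    by (rule Lim_null_comparison[OF ev lim])
qed

end
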